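(* Let $q$ be a prime power, let $k \ge 2$, let $0 < \varepsilon < 1$, let $\eta \ge 600$, and let $\mathcal{C} \subseteq \mathbb{F}_q^n$ be a linear code of dimension $k$. Let $b \ge 1$ be an integer such that every nonzero codeword of $\mathcal{C}$ has weight at least $b$, and such that for every integer $\alpha \ge 1$ the number of codewords of weight at most $\alpha b$ is at most $(qk)^{\alpha}$. Let $p = \frac{\eta \log_2(k)\log_2(q)}{b \varepsilon^2}$ and assume $p \le 1$. Sample each coordinate $i \in [n]$ independently with probability $p$, and give each sampled coordinate weight $1/p$; let $S$ be the set of sampled coordinates. Then with probability at least $1 - 2^{-(0.19\eta - 110)\log_2 k} \cdot k^{-101}$, for every $c \in \mathcal{C}$, $$(1-\varepsilon)\mathrm{wt}(c) \le \tfrac{1}{p} \,\mathrm{wt}(c|_S) \le (1+\varepsilon)\mathrm{wt}(c).$$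
   Context: $\mathrm{wt}(c)$ is the number of nonzero coordinates of $c$, and $c|_S=(c_i)_{i\in S}$. *)

theory Defs
  imports "HOL-Analysis.Analysis" "HOL-Probability.Probability"
begin

definition wt :: "'a::zero ^ 'n \<Rightarrow> nat" where
  "wt c = card {i. c $ i \<noteq> 0}"

definition wt_restr :: "'a::zero ^ 'n \<Rightarrow> 'n set \<Rightarrow> nat" where
  "wt_restr c S = card {i \<in> S. c $ i \<noteq> 0}"

definition sample_coords :: "real \<Rightarrow> ('n::finite) set pmf" where
  "sample_coords p = map_pmf (\<lambda>f. {i. f i}) (Pi_pmf UNIV False (\<lambda>_. bernoulli_pmf p))"

end

theory Submission
  imports Defs
begin

lemma mgf:
  fixes T :: "'n::finite set"
  assumes "0 \<le> p" "p \<le> 1"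
  shows "measure_pmf.expectation (Pi_pmf UNIV False (\<lambda>_. bernoulli_pmf p))
           (\<lambda>f. exp (s * real (card {i\<in>T. f i}))) = (1 - p + p * exp s) ^ card T"
proof -
  have eq: "exp (s * real (card {i\<in>T. f i})) = (\<Prod>i\<in>UNIV. (\<lambda>i v. if i \<in> T \<and> v then exp s else 1) i (f i))" for f :: "'n \<Rightarrow> bool"
  proof -
    have "(\<Prod>i\<in>UNIV. (if i \<in> T \<and> f i then exp s else 1)) = (\<Prod>i\<in>{i\<in>T. f i}. exp s)"
      by (rule prod.mono_neutral_cong_right) auto
    also have "\<dots> = exp s ^ card {i\<in>T. f i}" by simp
    also have "\<dots> = exp (s * real (card {i\<in>T. f i}))"
      by (simp add: exp_of_nat_mult[symmetric] mult.commute)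
    finally show ?thesis by simp
  qed
  have "measure_pmf.expectation (Pi_pmf UNIV False (\<lambda>_. bernoulli_pmf p))
           (\<lambda>f. exp (s * real (card {i\<in>T. f i})))
       = measure_pmf.expectation (Pi_pmf UNIV False (\<lambda>_. bernoulli_pmf p))
           (\<lambda>f. \<Prod>i\<in>UNIV. (\<lambda>i v. if i \<in> T \<and> v then exp s else 1) i (f i))"
    by (simp only: eq)
  also have "\<dots> = (\<Prod>i\<in>UNIV. measure_pmf.expectation (bernoulli_pmf p) (\<lambda>v. if i \<in> T \<and> v then exp s else 1))"
    by (rule expectation_prod_Pi_pmf) (auto intro: integrable_measure_pmf_finite)
  also have "\<dots> = (\<Prod>i\<in>UNIV. if i \<in> T then 1 - p + p * exp s else 1)"
  proof (intro prod.cong refl)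
    fix i :: 'n
    show "measure_pmf.expectation (bernoulli_pmf p) (\<lambda>v. if i \<in> T \<and> v then exp s else 1) = (if i \<in> T then 1 - p + p * exp s else 1)"
      using assms by (cases "i \<in> T") (simp_all add: algebra_simps)
  qed
  also have "\<dots> = (\<Prod>i\<in>T. 1 - p + p * exp s)"
    by (simp add: prod.If_cases)
  finally show ?thesis by simp
qed

lemma exp_neg_bound: "0 \<le> (t::real) \<Longrightarrow> exp (-t) \<le> 1 - t + t\<^sup>2"
proof -
  assume t: "0 \<le> t"
  have "1 + t \<le> exp t" by (rule exp_ge_add_one_self)
  hence "exp (-t) \<le> 1 / (1 + t)" using t by (simp add: exp_minus field_simps)
  also have "\<dots> \<le> 1 - t + t\<^sup>2" using t
    by (simp add: field_simps power2_eq_square)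
  finally show ?thesis .
qed

lemma mgf_bound:
  fixes T :: "'n::finite set"
  assumes "0 \<le> p" "p \<le> 1" "\<bar>s\<bar> \<le> 1" "exp s \<le> 1 + s + s\<^sup>2"
  shows "measure_pmf.expectation (Pi_pmf UNIV False (\<lambda>_. bernoulli_pmf p))
           (\<lambda>f. exp (s * real (card {i\<in>T. f i}))) \<le> exp (p * real (card T) * (s + s\<^sup>2))"
proof -
  have "1 - p + p * exp s \<le> 1 + p * (s + s\<^sup>2)"
    using assms mult_left_mono[OF assms(4) assms(1)] by (simp add: algebra_simps)
  also have "\<dots> \<le> exp (p * (s + s\<^sup>2))" by (rule exp_ge_add_one_self)
  finally have h: "1 - p + p * exp s \<le> exp (p * (s + s\<^sup>2))" .
  have h0: "0 \<le> 1 - p + p * exp s" using assms by (simp add: add_nonneg_nonneg)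
  have "(1 - p + p * exp s) ^ card T \<le> exp (p * (s + s\<^sup>2)) ^ card T"
    by (rule power_mono[OF h h0])
  also have "\<dots> = exp (p * real (card T) * (s + s\<^sup>2))"
    by (simp add: exp_of_nat_mult[symmetric] mult_ac)
  finally show ?thesis using mgf[OF assms(1,2), of s T] by simp
qed

lemma tail_generic:
  fixes T :: "'n::finite set"
  assumes p: "0 \<le> p" "p \<le> 1" and s: "\<bar>s\<bar> \<le> 1" "exp s \<le> 1 + s + s\<^sup>2"
  shows "measure (Pi_pmf UNIV False (\<lambda>_. bernoulli_pmf p)) {f. a \<le> s * real (card {i\<in>T. f i})}
         \<le> exp (p * real (card T) * (s + s\<^sup>2) - a)"
proof -
  let ?P = "Pi_pmf UNIV False (\<lambda>_. bernoulli_pmf p)"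
  have "{f. a \<le> s * real (card {i\<in>T. f i})} = {f \<in> space ?P. exp a \<le> exp (s * real (card {i\<in>T. f i}))}"
    by auto
  hence "measure ?P {f. a \<le> s * real (card {i\<in>T. f i})}
       = measure ?P {f \<in> space ?P. exp a \<le> exp (s * real (card {i\<in>T. f i}))}" by simp
  also have "\<dots> \<le> measure_pmf.expectation ?P (\<lambda>f. exp (s * real (card {i\<in>T. f i}))) / exp a"
    by (rule integral_Markov_inequality_measure[where A = UNIV]) (auto intro: integrable_measure_pmf_finite)
  also have "\<dots> \<le> exp (p * real (card T) * (s + s\<^sup>2)) / exp a"
    by (rule divide_right_mono[OF mgf_bound[OF p s]]) simp
  also have "\<dots> = exp (p * real (card T) * (s + s\<^sup>2) - a)" by (simp add: exp_diff)
  finally show ?thesis .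
qed

lemma upper_tail:
  fixes T :: "'n::finite set"
  assumes p: "0 \<le> p" "p \<le> 1" and e: "0 < e" "e < 1"
  shows "measure (Pi_pmf UNIV False (\<lambda>_. bernoulli_pmf p)) {f. (1 + e) * (p * real (card T)) \<le> real (card {i\<in>T. f i})}
         \<le> exp (- (e\<^sup>2 * (p * real (card T)) / 4))"
proof -
  define \<mu> where "\<mu> = p * real (card T)"
  have "{f. (1 + e) * \<mu> \<le> real (card {i\<in>T. f i})} = {f. e/2 * ((1 + e) * \<mu>) \<le> e/2 * real (card {i\<in>T. f i})}"
    using e by auto
  moreover have "measure (Pi_pmf UNIV False (\<lambda>_. bernoulli_pmf p)) {f. e/2 * ((1 + e) * \<mu>) \<le> e/2 * real (card {i\<in>T. f i})}
     \<le> exp (\<mu> * (e/2 + (e/2)\<^sup>2) - e/2 * ((1 + e) * \<mu>))"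
    unfolding \<mu>_def by (rule tail_generic[OF p]) (use e in \<open>auto intro!: exp_bound\<close>)
  moreover have "\<mu> * (e/2 + (e/2)\<^sup>2) - e/2 * ((1 + e) * \<mu>) = - (e\<^sup>2 * \<mu> / 4)"
    by (simp add: algebra_simps power2_eq_square)
  ultimately show ?thesis unfolding \<mu>_def by simp
qed

lemma lower_tail:
  fixes T :: "'n::finite set"
  assumes p: "0 \<le> p" "p \<le> 1" and e: "0 < e" "e < 1"
  shows "measure (Pi_pmf UNIV False (\<lambda>_. bernoulli_pmf p)) {f. real (card {i\<in>T. f i}) \<le> (1 - e) * (p * real (card T))}
         \<le> exp (- (e\<^sup>2 * (p * real (card T)) / 4))"
proof -
  define \<mu> where "\<mu> = p * real (card T)"
  have "{f. real (card {i\<in>T. f i}) \<le> (1 - e) * \<mu>} = {f. - e/2 * ((1 - e) * \<mu>) \<le> - e/2 * real (card {i\<in>T. f i})}"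
    using e by auto
  moreover have "measure (Pi_pmf UNIV False (\<lambda>_. bernoulli_pmf p)) {f. - e/2 * ((1 - e) * \<mu>) \<le> - e/2 * real (card {i\<in>T. f i})}
     \<le> exp (\<mu> * (- e/2 + (- e/2)\<^sup>2) - (- e/2 * ((1 - e) * \<mu>)))"
    unfolding \<mu>_def by (rule tail_generic[OF p]) (use e exp_neg_bound[of "e/2"] in \<open>auto\<close>)
  moreover have "\<mu> * (- e/2 + (- e/2)\<^sup>2) - (- e/2 * ((1 - e) * \<mu>)) = - (e\<^sup>2 * \<mu> / 4)"
    by (simp add: power2_eq_square field_simps)
  ultimately show ?thesis unfolding \<mu>_def by simp
qed

lemma geom_sum_bound:
  fixes r :: real assumes "0 \<le> r" "r \<le> 1/2"
  shows "(\<Sum>y\<in>{1..N}. r ^ y) \<le> 2 * r - 2 * r ^ (N + 1)"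
proof (induction N)
  case 0 then show ?case by simp
next
  case (Suc N)
  have "r ^ (N + 1) * (2 * r) \<le> r ^ (N+1) * 1"
    using assms by (intro mult_left_mono) auto
  hence "r ^ (N + 2) * 2 \<le> r ^ (N+1)" by (simp add: algebra_simps)
  then show ?case using Suc by (simp add: sum.cl_ivl_Suc field_simps)
qed

lemma bad_bound:
  fixes c :: "('a::{finite,field}) ^ ('n::finite)"
  assumes p: "0 < p" "p \<le> 1" and e: "0 < e" "e < 1"
  shows "measure (Pi_pmf UNIV False (\<lambda>_. bernoulli_pmf p))
     {f. \<not> ((1 - e) * real (wt c) \<le> real (wt_restr c {i. f i}) / p
            \<and> real (wt_restr c {i. f i}) / p \<le> (1 + e) * real (wt c))}
     \<le> 2 * exp (- (e\<^sup>2 * (p * real (wt c)) / 4))"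
proof -
  let ?P = "Pi_pmf UNIV False (\<lambda>_. bernoulli_pmf p)"
  define T where "T = {i. c $ i \<noteq> 0}"
  have wr: "wt_restr c {i. f i} = card {i\<in>T. f i}" for f
    unfolding wt_restr_def T_def by (rule arg_cong[where f=card]) auto
  have w: "wt c = card T" unfolding wt_def T_def ..
  have "{f. \<not> ((1 - e) * real (wt c) \<le> real (wt_restr c {i. f i}) / p
            \<and> real (wt_restr c {i. f i}) / p \<le> (1 + e) * real (wt c))}
     \<subseteq> {f. (1 + e) * (p * real (card T)) \<le> real (card {i\<in>T. f i})}
       \<union> {f. real (card {i\<in>T. f i}) \<le> (1 - e) * (p * real (card T))}"
    using p by (auto simp: wr w field_simps)
  hence "measure ?P {f. \<not> ((1 - e) * real (wt c) \<le> real (wt_restr c {i. f i}) / p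
            \<and> real (wt_restr c {i. f i}) / p \<le> (1 + e) * real (wt c))}
      \<le> measure ?P ({f. (1 + e) * (p * real (card T)) \<le> real (card {i\<in>T. f i})}
       \<union> {f. real (card {i\<in>T. f i}) \<le> (1 - e) * (p * real (card T))})"
    by (intro measure_pmf.finite_measure_mono) auto
  also have "\<dots> \<le> measure ?P {f. (1 + e) * (p * real (card T)) \<le> real (card {i\<in>T. f i})}
       + measure ?P {f. real (card {i\<in>T. f i}) \<le> (1 - e) * (p * real (card T))}"
    by (rule measure_Un_le) auto
  also have "\<dots> \<le> 2 * exp (- (e\<^sup>2 * (p * real (card T)) / 4))"
    using upper_tail[of p e T] lower_tail[of p e T] p e by simp
  finally show ?thesis by (simp add: w)
qed

theorem claim4p3:
  fixes C :: "(('a::{finite,field}) ^ ('n::finite)) set"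
    and k b :: nat and \<epsilon> \<eta> p :: real
  assumes code: "vec.subspace C"
    and dimC: "vec.dim C = k"
    and k2: "k \<ge> 2"
    and eps: "0 < \<epsilon>" "\<epsilon> < 1"
    and eta: "\<eta> \<ge> 600"
    and b1: "b \<ge> 1"
    and minwt: "\<forall>c\<in>C. c \<noteq> 0 \<longrightarrow> wt c \<ge> b"
    and count: "\<forall>\<alpha>::nat. \<alpha> \<ge> 1 \<longrightarrow>
                  real (card {c\<in>C. wt c \<le> \<alpha> * b}) \<le> (real CARD('a) * real k) ^ \<alpha>"
    and p_def: "p = \<eta> * log 2 (real k) * log 2 (real CARD('a)) / (real b * \<epsilon>\<^sup>2)"
    and p1: "p \<le> 1"
  shows "measure_pmf.prob (sample_coords p)
           {S. \<forall>c\<in>C. (1 - \<epsilon>) * real (wt c) \<le> real (wt_restr c S) / p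
                    \<and> real (wt_restr c S) / p \<le> (1 + \<epsilon>) * real (wt c)}
         \<ge> 1 - 2 powr (- (0.19 * \<eta> - 110) * log 2 (real k)) * real k powr (-101)"
proof -
  define q where "q = real CARD('a)"
  define a where "a = log 2 q"
  define l where "l = log 2 (real k)"
  define L where "L = a * l"
  have q2: "q \<ge> 2"
  proof -
    have "card {0, 1::'a} \<le> CARD('a)" by (rule card_mono) auto
    thus ?thesis unfolding q_def by simp
  qed
  have a1: "a \<ge> 1" unfolding a_def using q2 by simp
  have l1: "l \<ge> 1" unfolding l_def using k2 by simp
  have qa: "q = 2 powr a" unfolding a_def using q2 by simp
  have kl: "real k = 2 powr l" unfolding l_def using k2 by simp
  have L1: "L \<ge> 1" unfolding L_def using a1 l1 by (metis mult_mono' mult_1 order_trans zero_le_one)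
  have bpos: "real b > 0" using b1 by simp
  have pbe: "p * real b * \<epsilon>\<^sup>2 = \<eta> * L"
    unfolding p_def L_def a_def l_def q_def using bpos eps by (simp add: field_simps)
  have p0: "p > 0" unfolding p_def using eta eps bpos a1 l1
    by (simp add: a_def l_def q_def) 
  let ?P = "Pi_pmf UNIV False (\<lambda>_. bernoulli_pmf p)"
  define good where "good c S \<longleftrightarrow> (1 - \<epsilon>) * real (wt c) \<le> real (wt_restr c S) / p
                    \<and> real (wt_restr c S) / p \<le> (1 + \<epsilon>) * real (wt c)" for c :: "'a^'n" and S
  define B where "B c = {f. \<not> good c {i. f i}}" for c
  define C' where "C' = C - {0}"
  define \<gamma> where "\<gamma> c = wt c div b" for c :: "'a^'n"
  define h where "h y = 2 * exp (- (\<eta> * L * real y / 4))" for y :: nat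
  define N where "N = CARD('n)"
  define r where "r = q * real k * exp (- (\<eta> * L / 4))"
  have finC: "finite C'" unfolding C'_def by (rule finite_subset[of _ UNIV]) auto
  have good0: "good 0 S" for S
    unfolding good_def wt_def wt_restr_def by simp
  have "measure_pmf.prob (sample_coords p) {S. \<forall>c\<in>C. good c S}
        = measure ?P {f. \<forall>c\<in>C. good c {i. f i}}"
    unfolding sample_coords_def by simp
  also have "\<dots> = 1 - measure ?P (space ?P - {f. \<forall>c\<in>C. good c {i. f i}})"
    by (subst measure_pmf.prob_compl) auto
  finally have eq1: "measure_pmf.prob (sample_coords p) {S. \<forall>c\<in>C. good c S}
        = 1 - measure ?P (space ?P - {f. \<forall>c\<in>C. good c {i. f i}})" .
  have "measure ?P (space ?P - {f. \<forall>c\<in>C. good c {i. f i}}) \<le> measure ?P (\<Union>c\<in>C'. B c)"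
    by (intro measure_pmf.finite_measure_mono) (auto simp: B_def C'_def good0)
  also have "\<dots> \<le> (\<Sum>c\<in>C'. measure ?P (B c))"
    by (rule measure_UNION_le[OF finC]) auto
  also have "\<dots> \<le> (\<Sum>c\<in>C'. h (\<gamma> c))"
  proof (rule sum_mono)
    fix c assume c: "c \<in> C'"
    hence wb: "wt c \<ge> b" using minwt unfolding C'_def by auto
    have "real (\<gamma> c) * real b \<le> real (wt c)"
      unfolding \<gamma>_def by (metis of_nat_le_iff of_nat_mult div_times_less_eq_dividend)
    hence "p * (real (\<gamma> c) * real b) * \<epsilon>\<^sup>2 \<le> p * real (wt c) * \<epsilon>\<^sup>2"
      using p0 by (intro mult_right_mono mult_left_mono) auto
    hence "\<eta> * L * real (\<gamma> c) \<le> \<epsilon>\<^sup>2 * (p * real (wt c))"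
      using pbe by (simp add: algebra_simps) (metis mult.assoc mult.commute)
    hence e1: "exp (- (\<epsilon>\<^sup>2 * (p * real (wt c)) / 4)) \<le> exp (- (\<eta> * L * real (\<gamma> c) / 4))"
      by simp
    have e2: "measure ?P (B c) \<le> 2 * exp (- (\<epsilon>\<^sup>2 * (p * real (wt c)) / 4))"
      unfolding B_def good_def using bad_bound[OF p0 p1 eps, of c] by simp
    show "measure ?P (B c) \<le> h (\<gamma> c)" unfolding h_def using e1 e2 by linarith
  qed
  also have "\<dots> = (\<Sum>y\<in>\<gamma> ` C'. \<Sum>c\<in>{c\<in>C'. \<gamma> c = y}. h (\<gamma> c))"
    by (rule sum.image_gen[OF finC])
  also have "\<dots> = (\<Sum>y\<in>\<gamma> ` C'. real (card {c\<in>C'. \<gamma> c = y}) * h y)"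
    by (intro sum.cong refl) simp
  also have "\<dots> \<le> (\<Sum>y\<in>\<gamma> ` C'. (q * real k) ^ (y + 1) * h y)"
  proof (rule sum_mono)
    fix y assume "y \<in> \<gamma> ` C'"
    have "{c\<in>C'. \<gamma> c = y} \<subseteq> {c\<in>C. wt c \<le> (y + 1) * b}"
    proof
      fix c assume "c \<in> {c\<in>C'. \<gamma> c = y}"
      hence "c \<in> C" "wt c div b = y" unfolding C'_def \<gamma>_def by auto
      moreover have "wt c < (wt c div b + 1) * b"
      proof -
        have "wt c mod b < b" using b1 by simp
        moreover have "wt c div b * b + wt c mod b = wt c" by (rule div_mult_mod_eq)
        moreover have "(wt c div b + 1) * b = wt c div b * b + b" by simp
        ultimately show ?thesis by linarith
      qed
      ultimately show "c \<in> {c\<in>C. wt c \<le> (y + 1) * b}" by auto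
    qed
    hence "card {c\<in>C'. \<gamma> c = y} \<le> card {c\<in>C. wt c \<le> (y + 1) * b}"
      by (intro card_mono) (auto intro: finite_subset[of _ UNIV])
    hence "real (card {c\<in>C'. \<gamma> c = y}) \<le> (q * real k) ^ (y + 1)"
      using count[rule_format, of "y+1"] unfolding q_def by simp
    thus "real (card {c\<in>C'. \<gamma> c = y}) * h y \<le> (q * real k) ^ (y + 1) * h y"
      by (rule mult_right_mono) (simp add: h_def)
  qed
  also have "\<dots> \<le> (\<Sum>y\<in>{1..N}. (q * real k) ^ (y + 1) * h y)"
  proof (rule sum_mono2)
    show "\<gamma> ` C' \<subseteq> {1..N}"
    proof
      fix y assume "y \<in> \<gamma> ` C'"
      then obtain c where c: "c \<in> C'" "y = \<gamma> c" by auto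
      hence wb: "wt c \<ge> b" using minwt unfolding C'_def by auto
      have "wt c \<le> N" unfolding wt_def N_def by (rule card_mono) auto
      moreover have "\<gamma> c \<le> wt c" unfolding \<gamma>_def by simp
      moreover have "\<gamma> c \<ge> 1" unfolding \<gamma>_def using div_le_mono[OF wb, of b] b1 by simp
      ultimately show "y \<in> {1..N}" using c by auto
    qed
  qed (auto simp: h_def q_def)
  also have "\<dots> = 2 * (q * real k) * (\<Sum>y\<in>{1..N}. r ^ y)"
    unfolding sum_distrib_left
  proof (intro sum.cong refl)
    fix y
    show "(q * real k) ^ (y + 1) * h y = 2 * (q * real k) * r ^ y"
      unfolding h_def r_def
      by (simp add: power_mult_distrib exp_of_nat_mult[symmetric] algebra_simps)
  qed
  finally have main: "measure ?P (space ?P - {f. \<forall>c\<in>C. good c {i. f i}})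
     \<le> 2 * (q * real k) * (\<Sum>y\<in>{1..N}. r ^ y)" .
  have La: "L \<ge> a + l - 1"
  proof -
    have "0 \<le> (a - 1) * (l - 1)" using a1 l1 by simp
    thus ?thesis unfolding L_def by (simp add: algebra_simps)
  qed
  have Ll: "L \<ge> l" unfolding L_def using a1 l1 by (simp add: mult_right_mono[of 1 a l, simplified])
  have etaL: "\<eta> * L \<ge> 600 * L" using eta L1 by (intro mult_right_mono) auto
  have F: "\<eta> * L / 4 - 0.19 * \<eta> * l \<ge> 150 * L - 114 * l"
  proof -
    have X: "L / 4 - 0.19 * l \<ge> 0" using Ll l1 by simp
    have "\<eta> * (L / 4 - 0.19 * l) \<ge> 600 * (L / 4 - 0.19 * l)"
      using eta X by (intro mult_right_mono) auto
    thus ?thesis by (simp add: algebra_simps)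
  qed
  have exp2: "exp (- x) \<le> 2 powr (- x)" if "x \<ge> 0" for x :: real
  proof -
    have "- x \<le> - x * ln 2" using that ln_2_less_1 by (simp add: mult_left_le)
    thus ?thesis by (simp add: powr_def)
  qed
  have qk: "q * real k = 2 powr (a + l)" using qa kl by (simp add: powr_add)
  have r0: "r \<ge> 0" unfolding r_def q_def by simp
  have "r \<le> 2 powr (a + l) * 2 powr (- (\<eta> * L / 4))"
    unfolding r_def qk using exp2[of "\<eta> * L / 4"] L1 eta by (intro mult_left_mono) auto
  also have "\<dots> = 2 powr (a + l - \<eta> * L / 4)" by (simp add: powr_add[symmetric])
  also have "\<dots> \<le> 2 powr (-1)"
  proof (rule powr_mono)
    show "a + l - \<eta> * L / 4 \<le> -1" using La etaL a1 l1 by linarith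
  qed simp
  finally have rhalf: "r \<le> 1/2" by (simp add: powr_minus)
  have geo: "(\<Sum>y\<in>{1..N}. r ^ y) \<le> 2 * r"
    using geom_sum_bound[OF r0 rhalf, of N] r0 by (smt (verit) zero_le_power)
  have "2 * (q * real k) * (\<Sum>y\<in>{1..N}. r ^ y) \<le> 2 * (q * real k) * (2 * r)"
    using geo q2 by (intro mult_left_mono) auto
  also have "\<dots> = 4 * (q * real k) ^ 2 * exp (- (\<eta> * L / 4))"
    unfolding r_def by (simp add: power2_eq_square)
  also have "\<dots> \<le> 4 * (2 powr (a + l)) ^ 2 * 2 powr (- (\<eta> * L / 4))"
  proof -
    have "0 \<le> \<eta> * L / 4" using L1 eta by simp
    hence ex: "exp (- (\<eta> * L / 4)) \<le> 2 powr (- (\<eta> * L / 4))" by (rule exp2)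
    show ?thesis unfolding qk by (rule mult_left_mono[OF ex]) simp
  qed
  also have "\<dots> = 2 powr (2 + 2 * (a + l) - \<eta> * L / 4)"
  proof -
    have "(2 powr (a + l)) ^ 2 = (2::real) powr (2 * (a + l))"
      by (simp add: power2_eq_square powr_add[symmetric])
    hence "4 * (2 powr (a + l)) ^ 2 * 2 powr (- (\<eta> * L / 4))
        = 2 powr 2 * 2 powr (2 * (a + l)) * 2 powr (- (\<eta> * L / 4))" by simp
    also have "\<dots> = 2 powr (2 + 2 * (a + l) + - (\<eta> * L / 4))" by (simp only: powr_add)
    finally show ?thesis by simp
  qed
  also have "\<dots> \<le> 2 powr (- (0.19 * \<eta> - 110) * l + (-101) * l)"
  proof (rule powr_mono)
    show "2 + 2 * (a + l) - \<eta> * L / 4 \<le> - (0.19 * \<eta> - 110) * l + (-101) * l"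
      using F La Ll a1 l1 by (simp add: algebra_simps)
  qed simp
  also have "\<dots> = 2 powr (- (0.19 * \<eta> - 110) * l) * real k powr (-101)"
  proof -
    have "(2 powr l) powr (-101) = (2::real) powr ((-101) * l)" by (simp add: powr_powr mult.commute)
    thus ?thesis by (simp add: kl powr_diff powr_minus_divide)
  qed
  finally have fin: "measure ?P (space ?P - {f. \<forall>c\<in>C. good c {i. f i}})
      \<le> 2 powr (- (0.19 * \<eta> - 110) * l) * real k powr (-101)" using main by linarith
  show ?thesis using eq1 fin unfolding good_def l_def by simp
qed

end
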